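(* Let $Y$ be a conformal Killing vector field of $g$, $\mathcal L_Y g_{\mu\nu}=2\omega(\mathrm{x})g_{\mu\nu}$. Let $(\mathrm{x}(\lambda),n(\lambda))$ be a solution of the Euler–Lagrange equations of $L$, fix $\lambda_0$, and set $W(\lambda)=\int_{\lambda_0}^{\lambda}n(s)\,\omega(\mathrm{x}(s))\,ds$. Then: (i) the non-local quantity $I(\lambda)=Y^\mu p_\mu+m^2W(\lambda)$ is constant along the solution; (ii) the non-local vector field $X=\left(Y^\mu-\frac{\dot{\mathrm{x}}^\mu}{n}W\right)\frac{\partial}{\partial\mathrm{x}^\mu}$, whose first prolongation $\mathrm{pr}^{(1)}X=X+\frac{dX^\mu}{d\lambda}\frac{\partial}{\partial\dot{\mathrm{x}}^\mu}$ is evaluated along the solution (using the equations of motion to eliminate accelerations), satisfies $\mathrm{pr}^{(1)}X(L)=0$, so that $X$ is a (non-local) Noether symmetry with constant surface term whose Noether charge is $I$.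
   Context: $(\mathcal M,g)$ is a pseudo-Riemannian manifold. Geodesic system: for a curve $\mathrm{x}^\mu(\lambda)$ and a positive function $n(\lambda)$ (the einbein), $L=\frac{1}{2n}g_{\mu\nu}\dot{\mathrm{x}}^\mu\dot{\mathrm{x}}^\nu-\frac{m^2}{2}n$ with $m$ a constant; its Euler–Lagrange equations are equivalent to $\ddot{\mathrm{x}}^\mu+\Gamma^\mu_{\kappa\lambda}\dot{\mathrm{x}}^\kappa\dot{\mathrm{x}}^\lambda=\dot{\mathrm{x}}^\mu\frac{d}{d\lambda}\ln n$ together with $\frac{1}{n^2}g_{\mu\nu}\dot{\mathrm{x}}^\mu\dot{\mathrm{x}}^\nu+m^2=0$. Momenta: $p_\mu=\frac1n g_{\mu\nu}\dot{\mathrm{x}}^\nu$. *)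

theory Defs
  imports "HOL-Analysis.Analysis"
begin

text \<open>We work in a single coordinate chart: points of the manifold are
coordinate vectors in real^'n, the metric is a matrix-valued function g,
and g y $ mu $ nu is the component g_{mu nu}(y).\<close>

definition partial_coord :: "(real^'n \<Rightarrow> 'b::real_normed_vector) \<Rightarrow> real^'n \<Rightarrow> 'n \<Rightarrow> 'b" where
  "partial_coord f y k = frechet_derivative f (at y) (axis k 1)"

definition gform :: "(real^'n \<Rightarrow> real^'n^'n) \<Rightarrow> real^'n \<Rightarrow> real^'n \<Rightarrow> real^'n \<Rightarrow> real" where
  "gform g y u v = (\<Sum>\<mu>\<in>UNIV. \<Sum>\<nu>\<in>UNIV. g y $ \<mu> $ \<nu> * u $ \<mu> * v $ \<nu>)"

definition Lag :: "(real^'n \<Rightarrow> real^'n^'n) \<Rightarrow> real \<Rightarrow> real^'n \<Rightarrow> real^'n \<Rightarrow> real \<Rightarrow> real" where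
  "Lag g m y v nn = gform g y v v / (2 * nn) - m\<^sup>2 * nn / 2"

definition L_x :: "(real^'n \<Rightarrow> real^'n^'n) \<Rightarrow> real \<Rightarrow> real^'n \<Rightarrow> real^'n \<Rightarrow> real \<Rightarrow> 'n \<Rightarrow> real" where
  "L_x g m y v nn \<mu> = frechet_derivative (\<lambda>z. Lag g m z v nn) (at y) (axis \<mu> 1)"

definition L_v :: "(real^'n \<Rightarrow> real^'n^'n) \<Rightarrow> real \<Rightarrow> real^'n \<Rightarrow> real^'n \<Rightarrow> real \<Rightarrow> 'n \<Rightarrow> real" where
  "L_v g m y v nn \<mu> = frechet_derivative (\<lambda>w. Lag g m y w nn) (at v) (axis \<mu> 1)"

definition L_n :: "(real^'n \<Rightarrow> real^'n^'n) \<Rightarrow> real \<Rightarrow> real^'n \<Rightarrow> real^'n \<Rightarrow> real \<Rightarrow> real" where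
  "L_n g m y v nn = deriv (\<lambda>s. Lag g m y v s) nn"

definition mom :: "(real^'n \<Rightarrow> real^'n^'n) \<Rightarrow> real^'n \<Rightarrow> real^'n \<Rightarrow> real \<Rightarrow> 'n \<Rightarrow> real" where
  "mom g y v nn \<mu> = (1 / nn) * (\<Sum>\<nu>\<in>UNIV. g y $ \<mu> $ \<nu> * v $ \<nu>)"

definition lie_metric :: "(real^'n \<Rightarrow> real^'n^'n) \<Rightarrow> (real^'n \<Rightarrow> real^'n) \<Rightarrow> real^'n \<Rightarrow> 'n \<Rightarrow> 'n \<Rightarrow> real" where
  "lie_metric g Y y \<mu> \<nu> =
     (\<Sum>\<kappa>\<in>UNIV. Y y $ \<kappa> * partial_coord g y \<kappa> $ \<mu> $ \<nu>)
   + (\<Sum>\<kappa>\<in>UNIV. g y $ \<kappa> $ \<nu> * partial_coord Y y \<mu> $ \<kappa>)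
   + (\<Sum>\<kappa>\<in>UNIV. g y $ \<mu> $ \<kappa> * partial_coord Y y \<nu> $ \<kappa>)"

definition oint :: "real \<Rightarrow> real \<Rightarrow> (real \<Rightarrow> real) \<Rightarrow> real" where
  "oint t0 t f = (if t0 \<le> t then integral {t0..t} f else - integral {t..t0} f)"

end

theory Submission imports Defs begin

lemma has_derivative_vec_nth' [derivative_intros]:
  "(f has_derivative f') F \<Longrightarrow> ((\<lambda>x. f x $ i) has_derivative (\<lambda>h. f' h $ i)) F"
  by (rule bounded_linear.has_derivative[OF bounded_linear_vec_nth])

lemma lin_expand:
  fixes f :: "real^'m \<Rightarrow> 'b::real_vector"
  assumes "linear f" shows "f v = (\<Sum>i\<in>UNIV. v$i *\<^sub>R f (axis i 1))"
proof -
  have "v = (\<Sum>i\<in>UNIV. v$i *\<^sub>R axis i 1)" using basis_expansion[of v]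
    by (simp add: scalar_mult_eq_scaleR)
  then have "f v = f (\<Sum>i\<in>UNIV. v$i *\<^sub>R axis i 1)" by simp
  also have "\<dots> = (\<Sum>i\<in>UNIV. v$i *\<^sub>R f (axis i 1))"
    using assms by (simp add: linear_sum linear_scale)
  finally show ?thesis .
qed

lemma Lx_formula:
  assumes "g differentiable (at y)" and nn: "nn \<noteq> 0"
  shows "L_x g m y v nn \<mu> = (\<Sum>\<kappa>\<in>UNIV. \<Sum>\<nu>\<in>UNIV. partial_coord g y \<mu> $ \<kappa> $ \<nu> * v$\<kappa> * v$\<nu>) / (2*nn)"
proof -
  let ?D = "frechet_derivative g (at y)"
  have D: "(g has_derivative ?D) (at y)" using assms frechet_derivative_works by blast
  have "((\<lambda>z. Lag g m z v nn) has_derivative (\<lambda>h. (\<Sum>\<kappa>\<in>UNIV. \<Sum>\<nu>\<in>UNIV. ?D h $ \<kappa> $ \<nu> * v$\<kappa> * v$\<nu>) / (2*nn))) (at y)"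
    unfolding Lag_def gform_def
    by (rule derivative_eq_intros D refl | simp add: nn)+
  then show ?thesis unfolding L_x_def partial_coord_def
    by (simp add: frechet_derivative_at[symmetric])
qed

lemma axis_comp: "axis \<mu> (1::real) $ k = (if k = \<mu> then 1 else 0)"
  by (simp add: axis_def)
lemma axis_sum1: "(\<Sum>k\<in>UNIV. f k * (axis \<mu> (1::real) $ k * c k)) = f \<mu> * c \<mu>"
proof -
  have "(\<Sum>k\<in>UNIV. f k * (axis \<mu> (1::real) $ k * c k)) = (\<Sum>k\<in>UNIV. if k = \<mu> then f \<mu> * c \<mu> else 0)"
    by (rule sum.cong) (auto simp: axis_comp)
  then show ?thesis by simp
qed
lemma axis_sum2: "(\<Sum>k\<in>UNIV. \<Sum>j\<in>UNIV. f k j * (axis \<mu> (1::real) $ k * c j)) = (\<Sum>j\<in>UNIV. f \<mu> j * c j)"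
proof -
  have "(\<Sum>k\<in>UNIV. \<Sum>j\<in>UNIV. f k j * (axis \<mu> (1::real) $ k * c j)) = (\<Sum>k\<in>UNIV. if k = \<mu> then (\<Sum>j\<in>UNIV. f \<mu> j * c j) else 0)"
    by (rule sum.cong) (auto simp: axis_comp)
  then show ?thesis by simp
qed
lemma axis_sum3: "(\<Sum>k\<in>UNIV. \<Sum>j\<in>UNIV. f k j * (c k * axis \<mu> (1::real) $ j)) = (\<Sum>k\<in>UNIV. f k \<mu> * c k)"
proof -
  have "\<And>k. (\<Sum>j\<in>UNIV. f k j * (c k * axis \<mu> (1::real) $ j)) = (\<Sum>j\<in>UNIV. if j = \<mu> then f k \<mu> * c k else 0)"
    by (rule sum.cong) (auto simp: axis_comp)
  then show ?thesis by simp
qed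

lemma Lv_formula:
  assumes sym: "\<forall>\<mu> \<nu>. g y $ \<mu> $ \<nu> = g y $ \<nu> $ \<mu>" and nn: "nn \<noteq> 0"
  shows "L_v g m y v nn \<mu> = mom g y v nn \<mu>"
proof -
  have "((\<lambda>w. Lag g m y w nn) has_derivative (\<lambda>h. (\<Sum>\<kappa>\<in>UNIV. \<Sum>\<nu>\<in>UNIV. g y $ \<kappa> $ \<nu> * (h$\<kappa> * v$\<nu> + v$\<kappa> * h$\<nu>)) / (2*nn))) (at v)"
    unfolding Lag_def gform_def
    by (rule derivative_eq_intros refl | simp add: nn algebra_simps sum.distrib)+
  then have "L_v g m y v nn \<mu> = (\<Sum>\<kappa>\<in>UNIV. \<Sum>\<nu>\<in>UNIV. g y $ \<kappa> $ \<nu> * (axis \<mu> 1 $\<kappa> * v$\<nu> + v$\<kappa> * axis \<mu> 1 $\<nu>)) / (2*nn)"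
    unfolding L_v_def by (simp add: frechet_derivative_at[symmetric])
  also have "\<dots> = ((\<Sum>\<nu>\<in>UNIV. g y $ \<mu> $ \<nu> * v$\<nu>) + (\<Sum>\<kappa>\<in>UNIV. g y $ \<kappa> $ \<mu> * v$\<kappa>)) / (2*nn)"
    by (simp add: distrib_left sum.distrib axis_sum2 axis_sum3)
  also have "\<dots> = mom g y v nn \<mu>"
    unfolding mom_def using sym nn by (simp add: field_simps)
  finally show ?thesis .
qed

lemma Ln_formula:
  assumes nn: "nn \<noteq> 0"
  shows "L_n g m y v nn = - gform g y v v / (2*nn^2) - m^2/2"
  unfolding L_n_def Lag_def
  apply (rule DERIV_imp_deriv)
  apply (rule derivative_eq_intros refl | simp add: nn)+
  apply (simp add: nn power2_eq_square field_simps)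
  done

lemma sum3_rot:
  fixes F :: "'a \<Rightarrow> 'b \<Rightarrow> 'c \<Rightarrow> real"
  shows "(\<Sum>k\<in>A. \<Sum>j\<in>B. \<Sum>i\<in>C. F i k j) = (\<Sum>i\<in>C. \<Sum>k\<in>A. \<Sum>j\<in>B. F i k j)"
proof -
  have "(\<Sum>k\<in>A. \<Sum>j\<in>B. \<Sum>i\<in>C. F i k j) = (\<Sum>k\<in>A. \<Sum>i\<in>C. \<Sum>j\<in>B. F i k j)"
    by (rule sum.cong[OF refl], rule sum.swap)
  also have "\<dots> = (\<Sum>i\<in>C. \<Sum>k\<in>A. \<Sum>j\<in>B. F i k j)" by (rule sum.swap)
  finally show ?thesis .
qed

lemma conf_alg:
  fixes G :: "'n::finite \<Rightarrow> 'n \<Rightarrow> real" and dG :: "'n \<Rightarrow> 'n \<Rightarrow> 'n \<Rightarrow> real"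
    and dY :: "'n \<Rightarrow> 'n \<Rightarrow> real" and Yv v :: "'n \<Rightarrow> real"
  assumes sym: "\<And>i j. G i j = G j i"
    and conf: "\<And>i j. (\<Sum>k\<in>UNIV. Yv k * dG k i j) + (\<Sum>k\<in>UNIV. G k j * dY i k) + (\<Sum>k\<in>UNIV. G i k * dY j k) = 2*w*G i j"
  shows "(\<Sum>i\<in>UNIV. (\<Sum>k\<in>UNIV. v k * dY k i) * (\<Sum>j\<in>UNIV. G i j * v j))
       + (\<Sum>i\<in>UNIV. Yv i * (\<Sum>k\<in>UNIV. \<Sum>j\<in>UNIV. dG i k j * v k * v j)) / 2
       = w * (\<Sum>i\<in>UNIV. \<Sum>j\<in>UNIV. G i j * v i * v j)"
proof -
  let ?S = "\<lambda>h. (\<Sum>i\<in>UNIV. \<Sum>j\<in>UNIV. h i j * v i * v j)"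
  have S_add: "\<And>h1 h2. ?S (\<lambda>i j. h1 i j + h2 i j) = ?S h1 + ?S h2"
    by (simp add: algebra_simps sum.distrib)
  have E: "?S (\<lambda>i j. (\<Sum>k\<in>UNIV. Yv k * dG k i j) + (\<Sum>k\<in>UNIV. G k j * dY i k) + (\<Sum>k\<in>UNIV. G i k * dY j k)) = 2*w * ?S G"
  proof -
    have "?S (\<lambda>i j. (\<Sum>k\<in>UNIV. Yv k * dG k i j) + (\<Sum>k\<in>UNIV. G k j * dY i k) + (\<Sum>k\<in>UNIV. G i k * dY j k)) = ?S (\<lambda>i j. 2*w*G i j)"
      by (simp only: conf)
    also have "\<dots> = 2*w * ?S G" by (simp add: sum_distrib_left algebra_simps)
    finally show ?thesis .
  qed
  have A: "?S (\<lambda>i j. \<Sum>k\<in>UNIV. Yv k * dG k i j) = (\<Sum>i\<in>UNIV. Yv i * (\<Sum>k\<in>UNIV. \<Sum>j\<in>UNIV. dG i k j * v k * v j))"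
  proof -
    have "?S (\<lambda>i j. \<Sum>k\<in>UNIV. Yv k * dG k i j) = (\<Sum>k\<in>UNIV. \<Sum>j\<in>UNIV. \<Sum>i\<in>UNIV. Yv i * dG i k j * v k * v j)"
      by (simp add: sum_distrib_right)
    also have "\<dots> = (\<Sum>i\<in>UNIV. \<Sum>k\<in>UNIV. \<Sum>j\<in>UNIV. Yv i * dG i k j * v k * v j)" by (rule sum3_rot)
    also have "\<dots> = (\<Sum>i\<in>UNIV. Yv i * (\<Sum>k\<in>UNIV. \<Sum>j\<in>UNIV. dG i k j * v k * v j))"
      by (simp add: sum_distrib_left algebra_simps)
    finally show ?thesis .
  qed
  have B: "?S (\<lambda>i j. \<Sum>k\<in>UNIV. G k j * dY i k) = (\<Sum>i\<in>UNIV. (\<Sum>k\<in>UNIV. v k * dY k i) * (\<Sum>j\<in>UNIV. G i j * v j))"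
  proof -
    have "?S (\<lambda>i j. \<Sum>k\<in>UNIV. G k j * dY i k) = (\<Sum>k\<in>UNIV. \<Sum>j\<in>UNIV. \<Sum>i\<in>UNIV. G i j * dY k i * v k * v j)"
      by (simp add: sum_distrib_right)
    also have "\<dots> = (\<Sum>i\<in>UNIV. \<Sum>k\<in>UNIV. \<Sum>j\<in>UNIV. G i j * dY k i * v k * v j)" by (rule sum3_rot)
    also have "\<dots> = (\<Sum>i\<in>UNIV. (\<Sum>k\<in>UNIV. v k * dY k i) * (\<Sum>j\<in>UNIV. G i j * v j))"
      by (simp add: sum_distrib_left sum_distrib_right algebra_simps)
    finally show ?thesis .
  qed
  have C: "?S (\<lambda>i j. \<Sum>k\<in>UNIV. G i k * dY j k) = ?S (\<lambda>i j. \<Sum>k\<in>UNIV. G k j * dY i k)"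
  proof -
    have "?S (\<lambda>i j. \<Sum>k\<in>UNIV. G i k * dY j k) = (\<Sum>j\<in>UNIV. \<Sum>i\<in>UNIV. (\<Sum>k\<in>UNIV. G k j * dY i k) * v i * v j)"
      by (simp add: sym mult.commute mult.left_commute)
    also have "\<dots> = ?S (\<lambda>i j. \<Sum>k\<in>UNIV. G k j * dY i k)" by (rule sum.swap)
    finally show ?thesis .
  qed
  from E have "?S (\<lambda>i j. \<Sum>k\<in>UNIV. Yv k * dG k i j) + ?S (\<lambda>i j. \<Sum>k\<in>UNIV. G k j * dY i k) + ?S (\<lambda>i j. \<Sum>k\<in>UNIV. G i k * dY j k) = 2*w * ?S G"
    by (simp only: S_add)
  then show ?thesis using A B C by simp
qed

lemma oint_deriv:
  fixes f :: "real \<Rightarrow> real"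
  assumes cont: "continuous_on {a<..<b} f" and t0: "t0 \<in> {a<..<b}" and t: "t \<in> {a<..<b}"
  shows "((\<lambda>u. oint t0 u f) has_real_derivative f t) (at t)"
proof -
  define c where "c = (a + min t t0) / 2"
  define d where "d = (b + max t t0) / 2"
  have cd: "a < c" "c < min t t0" "max t t0 < d" "d < b" using t0 t by (auto simp: c_def d_def)
  have sub: "{c..d} \<subseteq> {a<..<b}" using cd by auto
  have contcd: "continuous_on {c..d} f" using continuous_on_subset[OF cont sub] .
  have intg: "\<And>p q. c \<le> p \<Longrightarrow> q \<le> d \<Longrightarrow> f integrable_on {p..q}"
    by (rule integrable_continuous_real, rule continuous_on_subset[OF contcd]) auto
  have eq: "oint t0 u f = integral {c..u} f - integral {c..t0} f" if u: "u \<in> {c<..<d}" for u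
  proof (cases "t0 \<le> u")
    case True
    have "integral {c..t0} f + integral {t0..u} f = integral {c..u} f"
      by (rule Henstock_Kurzweil_Integration.integral_combine) (use True cd u in \<open>auto intro!: intg\<close>)
    then show ?thesis using True by (simp add: oint_def)
  next
    case False
    have "integral {c..u} f + integral {u..t0} f = integral {c..t0} f"
      by (rule Henstock_Kurzweil_Integration.integral_combine) (use False cd u in \<open>auto intro!: intg\<close>)
    then show ?thesis using False by (simp add: oint_def)
  qed
  have "((\<lambda>u. integral {c..u} f) has_vector_derivative f t) (at t within {c..d})"
    by (rule integral_has_vector_derivative[OF contcd]) (use cd in auto)
  moreover have "at t within {c..d} = at t" by (rule at_within_Icc_at) (use cd in auto)
  ultimately have "((\<lambda>u. integral {c..u} f) has_real_derivative f t) (at t)"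
    by (simp add: has_real_derivative_iff_has_vector_derivative)
  then have "((\<lambda>u. integral {c..u} f - integral {c..t0} f) has_real_derivative f t - 0) (at t)"
    by (intro derivative_intros)
  then have "((\<lambda>u. integral {c..u} f - integral {c..t0} f) has_real_derivative f t) (at t)" by simp
  then show ?thesis
    by (rule has_field_derivative_transform_within_open[where S="{c<..<d}"]) (use cd eq in auto)
qed

lemma alg_help: "(n::real) \<noteq> 0 \<Longrightarrow> A * (1 / n * S) + Y * (Q / (2 * n)) = (A * S + Y * Q / 2) / n"
  by (simp add: field_simps)

lemma sum_help: "(\<Sum>i\<in>A. (a i + b i / 2) / (c::real)) = ((\<Sum>i\<in>A. a i) + (\<Sum>i\<in>A. b i) / 2) / c"
proof -
  have "(\<Sum>i\<in>A. (a i + b i / 2) / c) = (\<Sum>i\<in>A. (a i + b i / 2)) / c" by (rule sum_divide_distrib[symmetric])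
  also have "(\<Sum>i\<in>A. (a i + b i / 2)) = (\<Sum>i\<in>A. a i) + (\<Sum>i\<in>A. b i) / 2"
    by (simp add: sum.distrib sum_divide_distrib)
  finally show ?thesis .
qed

lemma alg2: "(n::real) \<noteq> 0 \<Longrightarrow> w * (- m\<^sup>2 * n\<^sup>2) / n = - m\<^sup>2 * (n * w)"
  by (simp add: power2_eq_square field_simps)

lemma DERIV_mult2:
  "(f has_field_derivative D) (at x within s) \<Longrightarrow> (g has_field_derivative E) (at x within s) \<Longrightarrow>
    ((\<lambda>x. f x * g x) has_field_derivative D * g x + f x * E) (at x within s)"
  using DERIV_mult'[of f D x s g E] by (simp add: add.commute)

lemma comp_chain:
  assumes xv: "(x has_vector_derivative v) (at t)" and Yd: "Y differentiable (at (x t))"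
  shows "((\<lambda>s. Y (x s) $ \<mu>) has_real_derivative (\<Sum>\<kappa>\<in>UNIV. v$\<kappa> * partial_coord Y (x t) \<kappa> $ \<mu>)) (at t)"
proof -
  let ?D = "frechet_derivative Y (at (x t))"
  have DY: "(Y has_derivative ?D) (at (x t))" using Yd frechet_derivative_works by blast
  have lin: "linear ?D" using has_derivative_bounded_linear[OF DY] bounded_linear.linear by blast
  have "(x has_derivative (\<lambda>h. h *\<^sub>R v)) (at t)" using xv by (simp add: has_vector_derivative_def)
  then have "((Y \<circ> x) has_derivative (?D \<circ> (\<lambda>h. h *\<^sub>R v))) (at t)" using DY by (rule diff_chain_at)
  then have "((\<lambda>s. (Y \<circ> x) s $ \<mu>) has_derivative (\<lambda>h. (?D \<circ> (\<lambda>h. h *\<^sub>R v)) h $ \<mu>)) (at t)"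
    by (rule has_derivative_vec_nth')
  moreover have "(\<lambda>h. (?D \<circ> (\<lambda>h. h *\<^sub>R v)) h $ \<mu>) = (*) (?D v $ \<mu>)"
    using lin by (simp add: linear_scale fun_eq_iff mult.commute)
  ultimately have "((\<lambda>s. Y (x s) $ \<mu>) has_real_derivative (?D v $ \<mu>)) (at t)"
    by (simp add: has_field_derivative_def o_def)
  moreover have "?D v $ \<mu> = (\<Sum>\<kappa>\<in>UNIV. v$\<kappa> * partial_coord Y (x t) \<kappa> $ \<mu>)"
    unfolding partial_coord_def by (subst lin_expand[OF lin]) (simp add: sum_component)
  ultimately show ?thesis by simp
qed

theorem mainTheorem3:
  fixes g :: "real^'n \<Rightarrow> real^'n^'n" and Y :: "real^'n \<Rightarrow> real^'n"
    and \<omega> :: "real^'n \<Rightarrow> real" and U :: "(real^'n) set"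
    and m a b t0 :: real and x xd :: "real \<Rightarrow> real^'n" and n :: "real \<Rightarrow> real"
  assumes U_open: "open U"
    and g_sym: "\<forall>y\<in>U. \<forall>\<mu> \<nu>. g y $ \<mu> $ \<nu> = g y $ \<nu> $ \<mu>"
    and g_nondeg: "\<forall>y\<in>U. det (g y) \<noteq> 0"
    and g_diff: "\<forall>y\<in>U. g differentiable (at y)"
    and Y_diff: "\<forall>y\<in>U. Y differentiable (at y)"
    and \<omega>_cont: "continuous_on U \<omega>"
    and conf_Killing: "\<forall>y\<in>U. \<forall>\<mu> \<nu>. lie_metric g Y y \<mu> \<nu> = 2 * \<omega> y * g y $ \<mu> $ \<nu>"
    and t0_in: "t0 \<in> {a<..<b}"
    and x_in: "\<forall>t\<in>{a<..<b}. x t \<in> U"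
    and x_deriv: "\<forall>t\<in>{a<..<b}. (x has_vector_derivative xd t) (at t)"
    and xd_diff: "\<forall>t\<in>{a<..<b}. xd differentiable (at t)"
    and n_pos: "\<forall>t\<in>{a<..<b}. n t > 0"
    and n_diff: "\<forall>t\<in>{a<..<b}. n differentiable (at t)"
    and EL_x: "\<forall>t\<in>{a<..<b}. \<forall>\<mu>.
                 ((\<lambda>s. L_v g m (x s) (xd s) (n s) \<mu>) has_real_derivative
                    L_x g m (x t) (xd t) (n t) \<mu>) (at t)"
    and EL_n: "\<forall>t\<in>{a<..<b}. L_n g m (x t) (xd t) (n t) = 0"
  shows "let W = (\<lambda>t. oint t0 t (\<lambda>s. n s * \<omega> (x s)));
             I = (\<lambda>t. (\<Sum>\<mu>\<in>UNIV. Y (x t) $ \<mu> * mom g (x t) (xd t) (n t) \<mu>) + m\<^sup>2 * W t);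
             X = (\<lambda>\<mu> t. Y (x t) $ \<mu> - xd t $ \<mu> / n t * W t)
         in (\<forall>t\<in>{a<..<b}. \<forall>s\<in>{a<..<b}. I t = I s)
          \<and> (\<forall>t\<in>{a<..<b}. \<forall>\<mu>. X \<mu> differentiable (at t))
          \<and> (\<forall>t\<in>{a<..<b}.
               (\<Sum>\<mu>\<in>UNIV. X \<mu> t * L_x g m (x t) (xd t) (n t) \<mu>)
             + (\<Sum>\<mu>\<in>UNIV. deriv (X \<mu>) t * L_v g m (x t) (xd t) (n t) \<mu>) = 0)
          \<and> (\<forall>t\<in>{a<..<b}. (\<Sum>\<mu>\<in>UNIV. X \<mu> t * L_v g m (x t) (xd t) (n t) \<mu>) = I t)"
proof -
  let ?T = "{a<..<b}"
  define f where "f = (\<lambda>s. n s * \<omega> (x s))"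
  define W where "W = (\<lambda>t. oint t0 t (\<lambda>s. n s * \<omega> (x s)))"
  define I where "I = (\<lambda>t. (\<Sum>\<mu>\<in>UNIV. Y (x t) $ \<mu> * mom g (x t) (xd t) (n t) \<mu>) + m\<^sup>2 * W t)"
  define X where "X = (\<lambda>\<mu> t. Y (x t) $ \<mu> - xd t $ \<mu> / n t * W t)"
  have xc: "continuous_on ?T x"
    by (rule continuous_at_imp_continuous_on) (use x_deriv has_vector_derivative_continuous in blast)
  have nc: "continuous_on ?T n"
    by (rule continuous_at_imp_continuous_on) (use n_diff differentiable_imp_continuous_within in blast)
  have oc: "continuous_on ?T (\<lambda>s. \<omega> (x s))"
    by (rule continuous_on_compose2[OF \<omega>_cont xc]) (use x_in in auto)
  have fc: "continuous_on ?T f" unfolding f_def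
    by (rule continuous_on_mult[OF nc oc])
  have Wd: "(W has_real_derivative f t) (at t)" if t: "t \<in> ?T" for t
    unfolding W_def using oint_deriv[OF fc t0_in t] unfolding f_def .
  have nz: "n t \<noteq> 0" if t: "t \<in> ?T" for t using n_pos t by force
  have Lv: "L_v g m (x t) (xd t) (n t) \<mu> = mom g (x t) (xd t) (n t) \<mu>" if t: "t \<in> ?T" for t \<mu>
    by (rule Lv_formula) (use g_sym x_in t nz[OF t] in auto)
  have Lx: "L_x g m (x t) (xd t) (n t) \<mu> = (\<Sum>\<kappa>\<in>UNIV. \<Sum>\<nu>\<in>UNIV. partial_coord g (x t) \<mu> $ \<kappa> $ \<nu> * xd t$\<kappa> * xd t$\<nu>) / (2*n t)"
    if t: "t \<in> ?T" for t \<mu>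
    by (rule Lx_formula) (use g_diff x_in t nz[OF t] in auto)
  have gf: "gform g (x t) (xd t) (xd t) = - m\<^sup>2 * (n t)\<^sup>2" if t: "t \<in> ?T" for t
  proof -
    have "- gform g (x t) (xd t) (xd t) / (2*(n t)^2) - m^2/2 = 0"
      using EL_n t Ln_formula[OF nz[OF t]] by metis
    then show ?thesis using nz[OF t] by (simp add: field_simps)
  qed
  have dY: "((\<lambda>s. Y (x s) $ \<mu>) has_real_derivative (\<Sum>\<kappa>\<in>UNIV. xd t$\<kappa> * partial_coord Y (x t) \<kappa> $ \<mu>)) (at t)"
    if t: "t \<in> ?T" for t \<mu>
    by (rule comp_chain) (use x_deriv Y_diff x_in t in auto)
  have I0: "(I has_real_derivative 0) (at t)" if t: "t \<in> ?T" for t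
  proof -
    define P where "P = (\<lambda>s. (\<Sum>\<mu>\<in>UNIV. Y (x s) $ \<mu> * L_v g m (x s) (xd s) (n s) \<mu>) + m\<^sup>2 * W s)"
    have d1: "(P has_real_derivative (\<Sum>\<mu>\<in>UNIV. (\<Sum>\<kappa>\<in>UNIV. xd t$\<kappa> * partial_coord Y (x t) \<kappa> $ \<mu>) * L_v g m (x t) (xd t) (n t) \<mu> + Y (x t) $ \<mu> * L_x g m (x t) (xd t) (n t) \<mu>) + m\<^sup>2 * f t) (at t)"
      unfolding P_def
      by (intro DERIV_add DERIV_sum DERIV_cmult Wd[OF t] DERIV_mult2 dY[OF t] EL_x[rule_format, OF t])
    have V0: "(\<Sum>\<mu>\<in>UNIV. (\<Sum>\<kappa>\<in>UNIV. xd t$\<kappa> * partial_coord Y (x t) \<kappa> $ \<mu>) * L_v g m (x t) (xd t) (n t) \<mu> + Y (x t) $ \<mu> * L_x g m (x t) (xd t) (n t) \<mu>) + m\<^sup>2 * f t = 0"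
    proof -
      let ?v = "\<lambda>i. xd t $ i"
      have conf: "\<And>i j. (\<Sum>k\<in>UNIV. Y (x t) $ k * partial_coord g (x t) k $ i $ j) + (\<Sum>k\<in>UNIV. g (x t) $ k $ j * partial_coord Y (x t) i $ k) + (\<Sum>k\<in>UNIV. g (x t) $ i $ k * partial_coord Y (x t) j $ k) = 2 * \<omega> (x t) * g (x t) $ i $ j"
      proof -
        fix i j
        have "lie_metric g Y (x t) i j = 2 * \<omega> (x t) * g (x t) $ i $ j"
          using conf_Killing x_in t by blast
        then show "(\<Sum>k\<in>UNIV. Y (x t) $ k * partial_coord g (x t) k $ i $ j) + (\<Sum>k\<in>UNIV. g (x t) $ k $ j * partial_coord Y (x t) i $ k) + (\<Sum>k\<in>UNIV. g (x t) $ i $ k * partial_coord Y (x t) j $ k) = 2 * \<omega> (x t) * g (x t) $ i $ j" unfolding lie_metric_def .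
      qed
      have symm: "\<And>i j. g (x t) $ i $ j = g (x t) $ j $ i" using g_sym x_in t by blast
      note CA = conf_alg[where G="\<lambda>i j. g (x t) $ i $ j" and Yv="\<lambda>k. Y (x t) $ k" and dG="\<lambda>k i j. partial_coord g (x t) k $ i $ j" and dY="\<lambda>k i. partial_coord Y (x t) k $ i" and w="\<omega> (x t)" and v="?v", OF symm conf]
      have S1: "(\<Sum>\<mu>\<in>UNIV. (\<Sum>\<kappa>\<in>UNIV. xd t$\<kappa> * partial_coord Y (x t) \<kappa> $ \<mu>) * L_v g m (x t) (xd t) (n t) \<mu> + Y (x t) $ \<mu> * L_x g m (x t) (xd t) (n t) \<mu>)
        = (\<Sum>\<mu>\<in>UNIV. ((\<Sum>\<kappa>\<in>UNIV. xd t$\<kappa> * partial_coord Y (x t) \<kappa> $ \<mu>) * (\<Sum>\<nu>\<in>UNIV. g (x t) $ \<mu> $ \<nu> * xd t $ \<nu>)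
             + Y (x t) $ \<mu> * (\<Sum>\<kappa>\<in>UNIV. \<Sum>\<nu>\<in>UNIV. partial_coord g (x t) \<mu> $ \<kappa> $ \<nu> * xd t$\<kappa> * xd t$\<nu>) / 2) / n t)"
        by (rule sum.cong[OF refl]) (simp only: Lv[OF t] Lx[OF t] mom_def alg_help[OF nz[OF t]])
      also have "\<dots> = ((\<Sum>\<mu>\<in>UNIV. (\<Sum>\<kappa>\<in>UNIV. xd t$\<kappa> * partial_coord Y (x t) \<kappa> $ \<mu>) * (\<Sum>\<nu>\<in>UNIV. g (x t) $ \<mu> $ \<nu> * xd t $ \<nu>))
             + (\<Sum>\<mu>\<in>UNIV. Y (x t) $ \<mu> * (\<Sum>\<kappa>\<in>UNIV. \<Sum>\<nu>\<in>UNIV. partial_coord g (x t) \<mu> $ \<kappa> $ \<nu> * xd t$\<kappa> * xd t$\<nu>)) / 2) / n t"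
        by (rule sum_help)
      also have "\<dots> = \<omega> (x t) * gform g (x t) (xd t) (xd t) / n t"
        by (simp only: CA gform_def)
      also have "\<dots> = - m\<^sup>2 * f t"
        by (simp only: gf[OF t] f_def alg2[OF nz[OF t]])
      finally show ?thesis by simp
    qed
    have PI: "P s = I s" if "s \<in> ?T" for s
      unfolding P_def I_def using Lv[OF that] by simp
    have d0: "(P has_real_derivative 0) (at t)" using d1 unfolding V0 .
    show ?thesis
      by (rule has_field_derivative_transform_within_open[OF d0 _ t PI]) simp_all
  qed
  have Iconst: "I t = I s" if ts: "t \<in> ?T" "s \<in> ?T" for t s
  proof -
    have "\<exists>c. \<forall>y\<in>?T. I y = c"
      by (rule has_field_derivative_zero_constant) (auto intro!: has_field_derivative_at_within I0)
    then show ?thesis using ts by auto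
  qed
  have xdc: "(\<lambda>s. xd s $ \<mu>) differentiable (at t)" if t: "t \<in> ?T" for t \<mu>
  proof -
    obtain D where "(xd has_derivative D) (at t)" using xd_diff t unfolding differentiable_def by blast
    then show ?thesis by (rule differentiableI[OF has_derivative_vec_nth'])
  qed
  have Xd: "X \<mu> differentiable (at t)" if t: "t \<in> ?T" for t \<mu>
    unfolding X_def
    by (intro differentiable_diff differentiable_mult differentiable_divide xdc[OF t]
        differentiableI[OF has_field_derivative_imp_has_derivative[OF dY[OF t]]]
        differentiableI[OF has_field_derivative_imp_has_derivative[OF Wd[OF t]]]
        n_diff[rule_format, OF t] nz[OF t])
  have Xd': "(X \<mu> has_real_derivative deriv (X \<mu>) t) (at t)" if t: "t \<in> ?T" for t \<mu>
    using Xd[OF t] DERIV_deriv_iff_real_differentiable by blast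
  have Iv: "(\<Sum>\<mu>\<in>UNIV. X \<mu> t * L_v g m (x t) (xd t) (n t) \<mu>) = I t" if t: "t \<in> ?T" for t
  proof -
    have "(\<Sum>\<mu>\<in>UNIV. X \<mu> t * L_v g m (x t) (xd t) (n t) \<mu>)
       = (\<Sum>\<mu>\<in>UNIV. Y (x t) $ \<mu> * mom g (x t) (xd t) (n t) \<mu> - W t / n t * (xd t $ \<mu> * mom g (x t) (xd t) (n t) \<mu>))"
      by (rule sum.cong[OF refl]) (simp add: X_def Lv[OF t] algebra_simps)
    also have "\<dots> = (\<Sum>\<mu>\<in>UNIV. Y (x t) $ \<mu> * mom g (x t) (xd t) (n t) \<mu>) - W t / n t * (\<Sum>\<mu>\<in>UNIV. xd t $ \<mu> * mom g (x t) (xd t) (n t) \<mu>)"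
      by (simp add: sum_subtractf sum_distrib_left)
    also have "(\<Sum>\<mu>\<in>UNIV. xd t $ \<mu> * mom g (x t) (xd t) (n t) \<mu>) = gform g (x t) (xd t) (xd t) / n t"
      unfolding mom_def gform_def by (simp add: sum_distrib_left sum_divide_distrib mult_ac)
    also have "\<dots> = - m\<^sup>2 * n t" using gf[OF t] nz[OF t] by (simp add: power2_eq_square)
    finally show ?thesis unfolding I_def using nz[OF t] by simp
  qed
  have iii: "(\<Sum>\<mu>\<in>UNIV. X \<mu> t * L_x g m (x t) (xd t) (n t) \<mu>)
             + (\<Sum>\<mu>\<in>UNIV. deriv (X \<mu>) t * L_v g m (x t) (xd t) (n t) \<mu>) = 0" if t: "t \<in> ?T" for t
  proof -
    define J where "J = (\<lambda>s. \<Sum>\<mu>\<in>UNIV. X \<mu> s * L_v g m (x s) (xd s) (n s) \<mu>)"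
    have dJ: "(J has_real_derivative (\<Sum>\<mu>\<in>UNIV. deriv (X \<mu>) t * L_v g m (x t) (xd t) (n t) \<mu> + X \<mu> t * L_x g m (x t) (xd t) (n t) \<mu>)) (at t)"
      unfolding J_def by (intro DERIV_sum DERIV_mult2 EL_x[rule_format, OF t] Xd'[OF t])
    have IJ: "I s = J s" if "s \<in> ?T" for s using Iv[OF that] unfolding J_def by simp
    have J0: "(J has_real_derivative 0) (at t)"
      by (rule has_field_derivative_transform_within_open[OF I0[OF t] _ t IJ]) simp_all
    have "(\<Sum>\<mu>\<in>UNIV. deriv (X \<mu>) t * L_v g m (x t) (xd t) (n t) \<mu> + X \<mu> t * L_x g m (x t) (xd t) (n t) \<mu>) = 0"
      using DERIV_unique[OF dJ J0] .
    then show ?thesis by (simp add: sum.distrib add.commute)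
  qed
  show ?thesis
    unfolding Let_def using Iconst Xd iii Iv unfolding I_def X_def W_def by blast
qed

end
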